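(* Let $C$ be a cycle and $T$ a shortcut tree for $C$ with respect to a length-function $\ell$ on $T\cup C$, and assume $V(C)=L(T)$, $|L(T)|\ge 3$, and $T$ has no vertex of degree $2$. Let $e_0\in E(C)$ be arbitrary. Then for any two distinct edges $e_1,e_2$ of $C$ sharing an endpoint we have $\ell(e_1)+\ell(e_2)>\ell(e_0)$. In particular $\ell(e_0)<\ell(C)/2$.
   Context: Graphs are finite, parallel edges allowed, no loops. A length-function is a map $\ell:E\to\mathbb{R}^+$ (strictly positive reals); $\ell(H)=\sum_{e\in E(H)}\ell(e)$. $\mathrm{sd}_G(A)$ is the minimum of $\ell(S)$ over connected subgraphs $S\subseteq G$ with $A\subseteq V(S)$. $L(T)$ is the set of leaves of $T$. Shortcut tree: let $H$ be a graph, $T$ a tree, both subgraphs of $T\cup H$, and $\ell$ a length-function on $T\cup H$. Then $T$ is a shortcut tree for $H$ if (SCT1) $V(T)\cap V(H)=L(T)$; (SCT2) $E(T)\cap E(H)=\emptyset$; (SCT3) $\ell(T)<\mathrm{sd}_H(L(T))$; (SCT4) for every proper subset $B\subsetneq L(T)$, $\mathrm{sd}_H(B)\le\mathrm{sd}_T(B)$. *)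

theory Defs
  imports Main "HOL-Library.Extended_Real"
begin

text \<open>Multigraphs (parallel edges allowed, no loops) inside a common ambient graph:
  vertices of type 'v, edges of type 'e, and a global incidence map inc giving
  the (two-element) set of endpoints of each edge.\<close>

definition is_graph :: "('e \<Rightarrow> 'v set) \<Rightarrow> 'v set \<Rightarrow> 'e set \<Rightarrow> bool" where
  "is_graph inc V E \<longleftrightarrow> finite V \<and> finite E \<and> (\<forall>e\<in>E. inc e \<subseteq> V \<and> card (inc e) = 2)"

definition adj_rel :: "('e \<Rightarrow> 'v set) \<Rightarrow> 'e set \<Rightarrow> ('v \<times> 'v) set" where
  "adj_rel inc E = {(u, v). \<exists>e\<in>E. inc e = {u, v}}"

definition connected_graph :: "('e \<Rightarrow> 'v set) \<Rightarrow> 'v set \<Rightarrow> 'e set \<Rightarrow> bool" where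
  "connected_graph inc V E \<longleftrightarrow> is_graph inc V E \<and> V \<noteq> {} \<and>
     (\<forall>u\<in>V. \<forall>v\<in>V. (u, v) \<in> (adj_rel inc E)\<^sup>*)"

definition degree :: "('e \<Rightarrow> 'v set) \<Rightarrow> 'e set \<Rightarrow> 'v \<Rightarrow> nat" where
  "degree inc E v = card {e\<in>E. v \<in> inc e}"

definition is_tree :: "('e \<Rightarrow> 'v set) \<Rightarrow> 'v set \<Rightarrow> 'e set \<Rightarrow> bool" where
  "is_tree inc V E \<longleftrightarrow> connected_graph inc V E \<and> (\<forall>e\<in>E. \<not> connected_graph inc V (E - {e}))"

definition is_cycle :: "('e \<Rightarrow> 'v set) \<Rightarrow> 'v set \<Rightarrow> 'e set \<Rightarrow> bool" where
  "is_cycle inc V E \<longleftrightarrow> connected_graph inc V E \<and> (\<forall>v\<in>V. degree inc E v = 2)"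

definition leaves :: "('e \<Rightarrow> 'v set) \<Rightarrow> 'v set \<Rightarrow> 'e set \<Rightarrow> 'v set" where
  "leaves inc V E = {v\<in>V. degree inc E v = 1}"

definition glen :: "('e \<Rightarrow> real) \<Rightarrow> 'e set \<Rightarrow> real" where
  "glen l E = (\<Sum>e\<in>E. l e)"

text \<open>Steiner distance sd_G(A): minimum length of a connected subgraph of G=(V,E)
  containing A. (The set is finite for finite G; we take its infimum.)\<close>
definition sd :: "('e \<Rightarrow> 'v set) \<Rightarrow> ('e \<Rightarrow> real) \<Rightarrow> 'v set \<Rightarrow> 'e set \<Rightarrow> 'v set \<Rightarrow> real" where
  "sd inc l V E A = Inf {glen l E' | V' E'. V' \<subseteq> V \<and> E' \<subseteq> E \<and> connected_graph inc V' E' \<and> A \<subseteq> V'}"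

definition shortcut_tree ::
  "('e \<Rightarrow> 'v set) \<Rightarrow> ('e \<Rightarrow> real) \<Rightarrow> 'v set \<Rightarrow> 'e set \<Rightarrow> 'v set \<Rightarrow> 'e set \<Rightarrow> bool" where
  "shortcut_tree inc l VT ET VH EH \<longleftrightarrow>
     is_tree inc VT ET \<and> is_graph inc VH EH \<and>
     (\<forall>e\<in>ET \<union> EH. l e > 0) \<and>
     VT \<inter> VH = leaves inc VT ET \<and>
     ET \<inter> EH = {} \<and>
     glen l ET < sd inc l VH EH (leaves inc VT ET) \<and>
     (\<forall>B. B \<subset> leaves inc VT ET \<longrightarrow> sd inc l VH EH B \<le> sd inc l VT ET B)"

end

theory Submission
  imports Defs
begin

lemma card2E:
  assumes "card S = 2"
  obtains a b where "S = {a,b}" "a \<noteq> b"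
proof -
  have "\<exists>a b. S = {a,b} \<and> a \<noteq> b" using assms by (simp only: card_2_iff)
  then show ?thesis using that by (elim exE conjE)
qed

lemma double_count:
  assumes "finite K" "finite E"
  shows "(\<Sum>x\<in>K. card {e\<in>E. x \<in> inc e}) = (\<Sum>e\<in>E. card (inc e \<inter> K))"
proof -
  have 1: "card {e\<in>E. x \<in> inc e} = (\<Sum>e\<in>E. if x \<in> inc e then 1 else 0)" for x
  proof -
    have "(\<Sum>e\<in>E. if x \<in> inc e then 1 else 0) = (\<Sum>e\<in>{e\<in>E. x \<in> inc e}. (1::nat))"
      by (rule sum.inter_filter[symmetric, OF assms(2)])
    then show ?thesis by simp
  qed
  have 2: "card (inc e \<inter> K) = (\<Sum>x\<in>K. if x \<in> inc e then 1 else 0)" for e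
  proof -
    have "(\<Sum>x\<in>K. if x \<in> inc e then 1 else 0) = (\<Sum>x\<in>{x\<in>K. x \<in> inc e}. (1::nat))"
      by (rule sum.inter_filter[symmetric, OF assms(1)])
    moreover have "inc e \<inter> K = {x\<in>K. x \<in> inc e}" by auto
    ultimately show ?thesis by simp
  qed
  show ?thesis unfolding 1 2 by (rule sum.swap)
qed

lemma handshake:
  assumes "is_graph inc V E"
  shows "(\<Sum>x\<in>V. degree inc E x) = 2 * card E"
proof -
  have f: "finite V" "finite E" and i: "\<forall>e\<in>E. inc e \<subseteq> V \<and> card (inc e) = 2"
    using assms by (auto simp: is_graph_def)
  have "(\<Sum>x\<in>V. degree inc E x) = (\<Sum>e\<in>E. card (inc e \<inter> V))"
    unfolding degree_def by (rule double_count[OF f])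
  also have "\<dots> = (\<Sum>e\<in>E. 2)"
    by (rule sum.cong) (use i in \<open>auto simp: Int_absorb2\<close>)
  finally show ?thesis by simp
qed

lemma cycle_card:
  assumes "is_cycle inc V E"
  shows "card E = card V"
proof -
  have g: "is_graph inc V E" and d: "\<forall>v\<in>V. degree inc E v = 2"
    using assms by (auto simp: is_cycle_def connected_graph_def)
  have "2 * card E = (\<Sum>x\<in>V. degree inc E x)" using handshake[OF g] by simp
  also have "\<dots> = (\<Sum>x\<in>V. 2)" using d by simp
  finally show ?thesis by simp
qed

lemma conn_card:
  assumes "connected_graph inc V E"
  shows "card V \<le> Suc (card E)"
proof -
  from assms have g: "is_graph inc V E" and ne: "V \<noteq> {}"
    and c: "\<forall>u\<in>V. \<forall>v\<in>V. (u,v) \<in> (adj_rel inc E)\<^sup>*" by (auto simp: connected_graph_def)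
  have fin: "finite V" "finite E" using g by (auto simp: is_graph_def)
  obtain r where r: "r \<in> V" using ne by blast
  define R where "R = adj_rel inc E"
  define d where "d x = (LEAST n. (r,x) \<in> R^^n)" for x
  have ex: "\<exists>n. (r,x) \<in> R^^n" if "x \<in> V" for x
    using c r that rtrancl_power unfolding R_def by blast
  have dI: "(r,x) \<in> R^^(d x)" if "x\<in>V" for x
    using ex[OF that] unfolding d_def by (rule LeastI_ex)
  have dle: "d x \<le> n" if "(r,x) \<in> R^^n" for x n
    unfolding d_def using that by (rule Least_le)
  have dpos: "d x \<noteq> 0" if "x \<in> V" "x \<noteq> r" for x
    using dI[OF that(1)] that(2) by (cases "d x") auto
  have step: "\<exists>e y. e \<in> E \<and> inc e = {y,x} \<and> (r,y) \<in> R^^(d x - 1)" if xx: "x \<in> V" "x \<noteq> r" for x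
  proof -
    obtain k where k: "d x = Suc k" using dpos[OF xx] by (cases "d x") auto
    then have "(r,x) \<in> R^^k O R" using dI[OF xx(1)] by simp
    then obtain y where "(r,y) \<in> R^^k" "(y,x) \<in> R" by blast
    then show ?thesis using k unfolding R_def adj_rel_def by auto
  qed
  define f where "f x = (SOME e. \<exists>y. e \<in> E \<and> inc e = {y,x} \<and> (r,y) \<in> R^^(d x - 1))" for x
  have fP: "\<exists>y. f x \<in> E \<and> inc (f x) = {y,x} \<and> (r,y) \<in> R^^(d x - 1)" if "x \<in> V" "x\<noteq>r" for x
    unfolding f_def using step[OF that] by (rule someI_ex)
  have inj: "inj_on f (V - {r})"
  proof (rule inj_onI)
    fix x x' assume x: "x \<in> V - {r}" "x' \<in> V - {r}" "f x = f x'"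
    show "x = x'"
    proof (rule ccontr)
      assume ne: "x \<noteq> x'"
      obtain y where y: "inc (f x) = {y,x}" "(r,y) \<in> R^^(d x - 1)" using fP x by blast
      obtain y' where y': "inc (f x') = {y',x'}" "(r,y') \<in> R^^(d x' - 1)" using fP x by blast
      have "{y,x} = {y',x'}" using y y' x(3) by simp
      then have "y = x'" "y' = x" using ne by (auto simp: doubleton_eq_iff)
      hence "d x' \<le> d x - 1" "d x \<le> d x' - 1" using dle y y' by auto
      moreover have "d x \<noteq> 0" "d x' \<noteq> 0" using dpos x by auto
      ultimately show False by arith
    qed
  qed
  have "f ` (V - {r}) \<subseteq> E" using fP by blast
  then have "card (V - {r}) \<le> card E" using inj card_inj_on_le fin by blast
  then show ?thesis using r fin by (simp add: card_Diff_singleton)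
qed

lemma cycle_minus_edge:
  assumes cyc: "is_cycle inc VC EC" and m: "m \<in> EC"
  shows "connected_graph inc VC (EC - {m})"
proof -
  have g: "is_graph inc VC EC" and ne: "VC \<noteq> {}"
    and conn: "\<forall>u\<in>VC. \<forall>v\<in>VC. (u,v) \<in> (adj_rel inc EC)\<^sup>*"
    and deg: "\<forall>v\<in>VC. degree inc EC v = 2"
    using cyc by (auto simp: is_cycle_def connected_graph_def)
  have fin: "finite VC" "finite EC" using g by (auto simp: is_graph_def)
  have ie: "inc e \<subseteq> VC" "card (inc e) = 2" if "e \<in> EC" for e
    using g that by (auto simp: is_graph_def)
  obtain a b where ab: "inc m = {a,b}" "a \<noteq> b" by (rule card2E[OF ie(2)[OF m]])
  have aV: "a \<in> VC" using ie(1)[OF m] ab by auto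
  define R' where "R' = adj_rel inc (EC - {m})"
  define K where "K = {x. (a,x) \<in> R'\<^sup>*}"
  have symR': "(y,x) \<in> R'" if "(x,y) \<in> R'" for x y
    using that by (auto simp: R'_def adj_rel_def insert_commute)
  have Kclosed: "y \<in> K" if "x \<in> K" "(x,y) \<in> R'" for x y
    using that unfolding K_def by (auto intro: rtrancl_into_rtrancl)
  have aK: "a \<in> K" by (simp add: K_def)
  have KV: "K \<subseteq> VC"
  proof
    fix x assume "x \<in> K"
    then have "(a,x) \<in> R'\<^sup>*" by (simp add: K_def)
    then show "x \<in> VC"
    proof (induct rule: rtrancl_induct)
      case base show ?case by (rule aV)
    next
      case (step y z)
      then obtain e where "e \<in> EC - {m}" "inc e = {y,z}" by (auto simp: R'_def adj_rel_def)
      then show ?case using ie(1)[of e] by auto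
    qed
  qed
  have finK: "finite K" using KV fin finite_subset by blast
  have inc_sub: "inc e \<inter> K = inc e" if eh: "e \<in> EC - {m}" "inc e \<inter> K \<noteq> {}" for e
  proof -
    have eE: "e \<in> EC" using eh(1) by simp
    obtain p q where pq: "inc e = {p,q}" by (rule card2E[OF ie(2)[OF eE]])
    have "(p,q) \<in> R'" "(q,p) \<in> R'" using pq eh(1) by (auto simp: R'_def adj_rel_def insert_commute)
    then show ?thesis using pq eh(2) Kclosed by auto
  qed
  have bK: "b \<in> K"
  proof (rule ccontr)
    assume bK: "b \<notin> K"
    have degm: "degree inc (EC - {m}) x = (if x = a then 1 else 2)" if "x \<in> K" for x
    proof -
      have xV: "x \<in> VC" using that KV by auto
      have "{e \<in> EC - {m}. x \<in> inc e} = {e\<in>EC. x \<in> inc e} - {m}" by auto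
      then have "degree inc (EC - {m}) x = degree inc EC x - (if x \<in> inc m then 1 else 0)"
        unfolding degree_def using m by (simp add: card_Diff_singleton_if)
      then show ?thesis using deg xV ab that bK by auto
    qed
    have "(\<Sum>x\<in>K. degree inc (EC - {m}) x) = (\<Sum>e\<in>EC - {m}. card (inc e \<inter> K))"
      unfolding degree_def by (rule double_count) (use finK fin in auto)
    moreover have "even (\<Sum>e\<in>EC - {m}. card (inc e \<inter> K))"
    proof (rule dvd_sum)
      fix e assume e: "e \<in> EC - {m}"
      show "2 dvd card (inc e \<inter> K)"
        using inc_sub[OF e] ie(2)[of e] e by (cases "inc e \<inter> K = {}") auto
    qed
    moreover have "(\<Sum>x\<in>K. degree inc (EC - {m}) x) = 1 + (\<Sum>x\<in>K - {a}. 2)"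
    proof -
      have "(\<Sum>x\<in>K. degree inc (EC - {m}) x) = (\<Sum>x\<in>K. (if x = a then 1 else 2))"
        using degm by (rule sum.cong[OF refl])
      also have "\<dots> = 1 + (\<Sum>x\<in>K - {a}. (if x = a then 1 else 2))"
        by (rule sum.remove[OF finK aK, of "\<lambda>x. if x = a then 1 else 2", unfolded if_P[OF refl]])
      also have "\<dots> = 1 + (\<Sum>x\<in>K - {a}. 2)" by (rule arg_cong[where f="(+) 1"], rule sum.cong) auto
      finally show ?thesis .
    qed
    ultimately have "even (1 + (\<Sum>x\<in>K - {a}. (2::nat)))" by metis
    then show False by (simp add: sum_distrib_left[symmetric])
  qed
  have closed: "y \<in> K" if "(a,y) \<in> (adj_rel inc EC)\<^sup>*" for y
    using that
  proof (induct rule: rtrancl_induct)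
    case base show ?case by (rule aK)
  next
    case (step y z)
    then obtain e where e: "e \<in> EC" "inc e = {y,z}" by (auto simp: adj_rel_def)
    show ?case
    proof (cases "e = m")
      case True then show ?thesis using e ab aK bK by auto
    next
      case False
      then have "(y,z) \<in> R'" using e by (auto simp: R'_def adj_rel_def)
      then show ?thesis using step Kclosed by blast
    qed
  qed
  have allK: "VC \<subseteq> K" using conn closed aV by blast
  have symc: "(R'\<inverse>) = R'" using symR' by auto
  have reach: "(u,v) \<in> R'\<^sup>*" if "u \<in> VC" "v \<in> VC" for u v
  proof -
    have 1: "(a,u) \<in> R'\<^sup>*" "(a,v) \<in> R'\<^sup>*" using that allK by (auto simp: K_def)
    have "(u,a) \<in> (R'\<inverse>)\<^sup>*" using 1(1) by (rule rtrancl_converseI)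
    then have "(u,a) \<in> R'\<^sup>*" using symc by simp
    then show ?thesis using 1(2) by (rule rtrancl_trans)
  qed
  have "is_graph inc VC (EC - {m})" using g by (auto simp: is_graph_def)
  then show ?thesis using ne reach unfolding connected_graph_def R'_def by blast
qed


lemma sd_le:
  assumes "\<forall>e\<in>E. l e > 0" "V' \<subseteq> V" "E' \<subseteq> E" "connected_graph inc V' E'" "A \<subseteq> V'"
  shows "sd inc l V E A \<le> glen l E'"
  unfolding sd_def
proof (rule cInf_lower)
  show "glen l E' \<in> {glen l E' |V' E'. V' \<subseteq> V \<and> E' \<subseteq> E \<and> connected_graph inc V' E' \<and> A \<subseteq> V'}"
    using assms by blast
  show "bdd_below {glen l E' |V' E'. V' \<subseteq> V \<and> E' \<subseteq> E \<and> connected_graph inc V' E' \<and> A \<subseteq> V'}"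
  proof (rule bdd_belowI)
    fix x assume "x \<in> {glen l E' |V' E'. V' \<subseteq> V \<and> E' \<subseteq> E \<and> connected_graph inc V' E' \<and> A \<subseteq> V'}"
    then obtain E'' where "x = glen l E''" "E'' \<subseteq> E" by blast
    moreover have "0 \<le> sum l E''"
      by (rule sum_nonneg) (use assms(1) \<open>E'' \<subseteq> E\<close> in \<open>auto intro: less_imp_le\<close>)
    ultimately show "0 \<le> x" unfolding glen_def by simp
  qed
qed

lemma sd_ge:
  assumes "V0 \<subseteq> V" "E0 \<subseteq> E" "connected_graph inc V0 E0" "A \<subseteq> V0"
    and "\<And>V' E'. V' \<subseteq> V \<Longrightarrow> E' \<subseteq> E \<Longrightarrow> connected_graph inc V' E' \<Longrightarrow> A \<subseteq> V' \<Longrightarrow> c \<le> glen l E'"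
  shows "c \<le> sd inc l V E A"
  unfolding sd_def
proof (rule cInf_greatest)
  show "{glen l E' |V' E'. V' \<subseteq> V \<and> E' \<subseteq> E \<and> connected_graph inc V' E' \<and> A \<subseteq> V'} \<noteq> {}"
    using assms(1-4) by blast
  fix x assume "x \<in> {glen l E' |V' E'. V' \<subseteq> V \<and> E' \<subseteq> E \<and> connected_graph inc V' E' \<and> A \<subseteq> V'}"
  then show "c \<le> x" using assms(5) by blast
qed

theorem lemma5p4:
  fixes inc :: "'e \<Rightarrow> 'v set" and l :: "'e \<Rightarrow> real"
    and VT VC :: "'v set" and ET EC :: "'e set"
  assumes "is_cycle inc VC EC"
    and "shortcut_tree inc l VT ET VC EC"
    and "VC = leaves inc VT ET"
    and "card (leaves inc VT ET) \<ge> 3"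
    and "\<forall>v\<in>VT. degree inc ET v \<noteq> 2"
    and "e0 \<in> EC"
  shows "(\<forall>e1\<in>EC. \<forall>e2\<in>EC. e1 \<noteq> e2 \<and> inc e1 \<inter> inc e2 \<noteq> {} \<longrightarrow> l e1 + l e2 > l e0)
         \<and> l e0 < glen l EC / 2"
proof -
  note cyc = assms(1)
  have g: "is_graph inc VC EC" and ne: "VC \<noteq> {}"
    and conn: "\<forall>u\<in>VC. \<forall>v\<in>VC. (u,v) \<in> (adj_rel inc EC)\<^sup>*"
    and deg: "\<forall>v\<in>VC. degree inc EC v = 2"
    using cyc by (auto simp: is_cycle_def connected_graph_def)
  have fin: "finite VC" "finite EC" using g by (auto simp: is_graph_def)
  have ie: "inc e \<subseteq> VC" "card (inc e) = 2" if "e \<in> EC" for e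
    using g that by (auto simp: is_graph_def)
  have st: "is_tree inc VT ET" "\<forall>e\<in>ET \<union> EC. l e > 0"
    "glen l ET < sd inc l VC EC (leaves inc VT ET)"
    "\<forall>B. B \<subset> leaves inc VT ET \<longrightarrow> sd inc l VC EC B \<le> sd inc l VT ET B"
    using assms(2)[unfolded shortcut_tree_def] by blast+
  have lpos: "l e > 0" if "e \<in> EC" for e using st(2) that by auto
  have lposT: "\<forall>e\<in>ET. l e > 0" using st(2) by auto
  have lposC: "\<forall>e\<in>EC. l e > 0" using st(2) by auto
  have Tconn: "connected_graph inc VT ET" using st(1) by (simp add: is_tree_def)
  have LVT: "leaves inc VT ET \<subseteq> VT" by (auto simp: leaves_def)
  have n3: "card VC \<ge> 3" using assms(3,4) by simp
  have cardE: "card EC = card VC" by (rule cycle_card[OF cyc])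
  define M where "M = Max (l ` EC)"
  have "M \<in> l ` EC" unfolding M_def using fin assms(6) by (intro Max_in) auto
  then obtain m where m: "m \<in> EC" "l m = M" by blast
  have mmax: "l e \<le> l m" if "e \<in> EC" for e
  proof -
    have "l e \<le> M" unfolding M_def by (rule Max_ge) (use fin(2) that in auto)
    then show ?thesis using m(2) by simp
  qed
  have glen_split: "glen l EC = glen l E' + glen l (EC - E')" if "E' \<subseteq> EC" for E'
    unfolding glen_def using sum.subset_diff[OF that fin(2)] by (simp add: add.commute)
  have key: "l e1 + l e2 > l m"
    if e12: "e1 \<in> EC" "e2 \<in> EC" "e1 \<noteq> e2" "v \<in> inc e1" "v \<in> inc e2" for e1 e2 v
  proof (rule ccontr)
    assume "\<not> l e1 + l e2 > l m"
    then have le: "l e1 + l e2 \<le> l m" by simp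
    have vV: "v \<in> VC" using ie(1)[OF e12(1)] e12(4) by auto
    define B where "B = VC - {v}"
    have Bsub: "B \<subset> leaves inc VT ET" using vV assms(3) unfolding B_def by auto
    have 1: "sd inc l VC EC B \<le> sd inc l VT ET B" by (rule mp[OF spec[OF st(4)] Bsub])
    have 2: "sd inc l VT ET B \<le> glen l ET"
      by (rule sd_le[OF lposT order_refl order_refl Tconn]) (use Bsub LVT in \<open>meson psubset_imp_subset order_trans\<close>)
    have 3: "sd inc l VC EC (leaves inc VT ET) \<le> glen l (EC - {m})"
      by (rule sd_le[OF lposC order_refl Diff_subset cycle_minus_edge[OF cyc m(1)]]) (simp add: assms(3))
    have 4: "glen l (EC - {m}) = glen l EC - l m"
      unfolding glen_def using m fin by (simp add: sum_diff1)
    have 5: "glen l EC - l m \<le> sd inc l VC EC B"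
    proof (rule sd_ge[OF order_refl order_refl assms(1)[unfolded is_cycle_def, THEN conjunct1]])
      show "B \<subseteq> VC" by (auto simp: B_def)
      fix V' E' assume V': "V' \<subseteq> VC" "E' \<subseteq> EC" "connected_graph inc V' E'" "B \<subseteq> V'"
      have finE': "finite E'" using V'(2) fin finite_subset by blast
      have cV': "card V' \<le> Suc (card E')" by (rule conn_card[OF V'(3)])
      have cD: "card (EC - E') = card EC - card E'" using V'(2) finE' by (simp add: card_Diff_subset)
      have cE': "card E' \<le> card EC" using V'(2) fin card_mono by blast
      have incV': "inc e \<subseteq> V'" if "e \<in> E'" for e
        using V'(3) that by (auto simp: connected_graph_def is_graph_def)
      have "glen l (EC - E') \<le> l m"
      proof (cases "v \<in> V'")
        case True
        then have "V' = VC" using V'(1,4) unfolding B_def by blast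
        then have "card VC \<le> Suc (card E')" using cV' by simp
        then have "card (EC - E') \<le> Suc 0" unfolding cD cardE by linarith
        moreover have finD: "finite (EC - E')" using fin(2) by simp
        ultimately have one: "\<forall>a\<in>EC - E'. \<forall>b\<in>EC - E'. a = b" by (simp add: card_le_Suc0_iff_eq)
        show ?thesis
        proof (cases "EC - E' = {}")
          case True
          have "0 < l m" using lpos m(1) by blast
          then show ?thesis unfolding glen_def True by simp
        next
          case False
          then obtain d where d: "d \<in> EC - E'" by blast
          then have "EC - E' = {d}" using one by blast
          moreover have "l d \<le> l m" using d mmax by blast
          ultimately show ?thesis unfolding glen_def by simp
        qed
      next
        case False
        then have "V' = VC - {v}" using V'(1,4) unfolding B_def by blast
        then have "card V' = card VC - 1" using vV fin(1) by simp
        then have c2: "card (EC - E') \<le> 2" using cV' n3 unfolding cD cardE by linarith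
        have "e1 \<notin> E'" using incV' False e12(4) by blast
        moreover have "e2 \<notin> E'" using incV' False e12(5) by blast
        ultimately have sub: "{e1,e2} \<subseteq> EC - E'" using e12(1,2) by blast
        have finD: "finite (EC - E')" using fin(2) by simp
        have c12: "card {e1,e2} = 2" using e12(3) by simp
        have "card (EC - E') \<le> card {e1,e2}" using c2 c12 by simp
        then have "{e1,e2} = EC - E'" using card_seteq[OF finD sub] by blast
        then have "glen l (EC - E') = glen l {e1,e2}" by simp
        also have "\<dots> = l e1 + l e2" using e12(3) unfolding glen_def by simp
        finally have "glen l (EC - E') = l e1 + l e2" .
        then show ?thesis using le by simp
      qed
      then show "glen l EC - l m \<le> glen l E'" using glen_split[OF V'(2)] by simp
    qed
    show False using 1 2 3 4 5 st(3) by linarith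
  qed
  have part1: "\<forall>e1\<in>EC. \<forall>e2\<in>EC. e1 \<noteq> e2 \<and> inc e1 \<inter> inc e2 \<noteq> {} \<longrightarrow> l e1 + l e2 > l e0"
  proof (intro ballI impI)
    fix e1 e2 assume h1: "e1 \<in> EC" and h2: "e2 \<in> EC" and h3: "e1 \<noteq> e2 \<and> inc e1 \<inter> inc e2 \<noteq> {}"
    from h3 obtain v where v1: "v \<in> inc e1" and v2: "v \<in> inc e2" by blast
    from h3 have h4: "e1 \<noteq> e2" by (rule conjunct1)
    have "l e1 + l e2 > l m" by (rule key[OF h1 h2 h4 v1 v2])
    then show "l e1 + l e2 > l e0" using mmax[OF assms(6)] by linarith
  qed
  have edges2: "\<exists>e'\<in>EC. e' \<noteq> e \<and> x \<in> inc e'" if "e \<in> EC" "x \<in> inc e" for e x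
  proof -
    have xV: "x \<in> VC" using ie(1)[OF that(1)] that(2) by blast
    have "card {e\<in>EC. x \<in> inc e} = 2" using bspec[OF deg xV] by (simp only: degree_def)
    then have "\<exists>p q. {e\<in>EC. x \<in> inc e} = {p,q} \<and> p \<noteq> q" by (simp only: card_2_iff)
    then obtain p q where pq: "{e\<in>EC. x \<in> inc e} = {p,q}" "p \<noteq> q" by (elim exE conjE)
    have "p \<in> {e\<in>EC. x \<in> inc e}" "q \<in> {e\<in>EC. x \<in> inc e}" unfolding pq(1) by simp_all
    then have "p \<in> EC" "x \<in> inc p" "q \<in> EC" "x \<in> inc q" by simp_all
    show ?thesis
    proof (cases "e = p")
      case True
      then have "q \<noteq> e" using pq(2) by simp
      show ?thesis by (rule bexI[of _ q]) (use \<open>q \<noteq> e\<close> \<open>q \<in> EC\<close> \<open>x \<in> inc q\<close> in auto)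
    next
      case False
      show ?thesis by (rule bexI[of _ p]) (use False \<open>p \<in> EC\<close> \<open>x \<in> inc p\<close> in auto)
    qed
  qed
  obtain a b where ab: "inc e0 = {a,b}" "a \<noteq> b" by (rule card2E[OF ie(2)[OF assms(6)]])
  have "a \<in> inc e0" using ab by simp
  then obtain e1 where e1: "e1 \<in> EC" "e1 \<noteq> e0" "a \<in> inc e1" using edges2[OF assms(6)] by blast
  obtain c where c: "inc e1 = {a,c}" "c \<noteq> a"
  proof -
    obtain p q where pq: "inc e1 = {p,q}" "p \<noteq> q" by (rule card2E[OF ie(2)[OF e1(1)]])
    show ?thesis
    proof (cases "a = p")
      case True then show ?thesis using that[of q] pq by simp
    next
      case False
      then have "a = q" using e1(3) pq by auto
      then show ?thesis using that[of p] pq False by (simp add: insert_commute)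
    qed
  qed
  have "c \<in> inc e1" using c by simp
  then obtain e' where e': "e' \<in> EC" "e' \<noteq> e1" "c \<in> inc e'" using edges2[OF e1(1)] by blast
  have "e' \<noteq> e0"
  proof
    assume e'0: "e' = e0"
    then have cb: "c = b" using e' ab c by auto
    have at: "{e\<in>EC. x \<in> inc e} = {e0,e1}" if "x \<in> {a,b}" for x
    proof -
      have xV: "x \<in> VC" using ie(1)[OF assms(6)] ab that by auto
      have "card {e\<in>EC. x \<in> inc e} = 2" using bspec[OF deg xV] by (simp only: degree_def)
      moreover have sub: "{e0,e1} \<subseteq> {e\<in>EC. x \<in> inc e}" using that ab c cb e1 assms(6) by auto
      moreover have "card {e0,e1} = 2" using e1(2) by simp
      moreover have fS: "finite {e\<in>EC. x \<in> inc e}" using fin(2) by simp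
      ultimately have "{e0,e1} = {e\<in>EC. x \<in> inc e}" using card_seteq[OF fS sub] by simp
      then show ?thesis by simp
    qed
    have reach: "y \<in> {a,b}" if "(a,y) \<in> (adj_rel inc EC)\<^sup>*" for y
      using that
    proof (induct rule: rtrancl_induct)
      case base show ?case by simp
    next
      case (step y z)
      then obtain e where e: "e \<in> EC" "inc e = {y,z}" by (auto simp: adj_rel_def)
      then have "e \<in> {e\<in>EC. y \<in> inc e}" by auto
      then have "e \<in> {e0,e1}" using at[OF step(3)] by simp
      then have "inc e = {a,b}" using ab c cb by auto
      then show ?case using e by auto
    qed
    have aV: "a \<in> VC" using ie(1)[OF assms(6)] ab by auto
    have "VC \<subseteq> {a,b}" using conn aV reach by blast
    then have "card VC \<le> card {a,b}" by (simp add: card_mono)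
    also have "\<dots> \<le> 2" by (simp add: card_insert_if)
    finally show False using n3 by simp
  qed
  have "l e1 + l e' > l m" by (rule key[OF e1(1) e'(1) e'(2)[symmetric] \<open>c \<in> inc e1\<close> e'(3)])
  moreover have "l e0 + l e1 + l e' \<le> glen l EC"
  proof -
    have sub: "{e0,e1,e'} \<subseteq> EC" using assms(6) e1 e' by auto
    have "glen l {e0,e1,e'} = l e0 + l e1 + l e'"
      using e1(2) e'(2) \<open>e' \<noteq> e0\<close> by (simp add: glen_def)
    moreover have "glen l {e0,e1,e'} \<le> glen l EC"
      unfolding glen_def by (rule sum_mono2[OF fin(2) sub]) (use lpos in \<open>auto simp: less_imp_le\<close>)
    ultimately show ?thesis by simp
  qed
  ultimately have "l e0 < glen l EC / 2" using mmax[OF assms(6)] by linarith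
  with part1 show ?thesis by blast
qed

end
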